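(* For any $n\ge 1$, the Hochschild lattice $(\mathsf{Tr}(n),\preccurlyeq)$ is extremal.
   Context: A triword of size $n$ is a word $u=u_1\cdots u_n$ with $u_i\in\{0,1,2\}$, $u_1\ne 2$, and such that $u_i=0$ implies $u_j\neq 1$ for all $j>i$; $\mathsf{Tr}(n)$ is their set, ordered componentwise ($u\preccurlyeq v$ iff $u_i\le v_i$ for all $i$); it is a lattice. An element of a finite lattice is join-irreducible (resp. meet-irreducible) if it covers (resp. is covered by) exactly one element. A finite lattice is extremal if the length $k$ of a longest saturated chain from its minimum to its maximum equals both the number of join-irreducible elements and the number of meet-irreducible elements. *)

theory Defs
  imports Main
begin

definition triword :: "nat \<Rightarrow> nat list \<Rightarrow> bool" where
  "triword n u \<longleftrightarrow> length u = n \<and> (\<forall>i<n. u ! i \<in> {0,1,2}) \<and>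
     (n \<ge> 1 \<longrightarrow> u ! 0 \<noteq> 2) \<and>
     (\<forall>i<n. \<forall>j<n. i < j \<longrightarrow> u ! i = 0 \<longrightarrow> u ! j \<noteq> 1)"

definition Tr :: "nat \<Rightarrow> nat list set" where
  "Tr n = {u. triword n u}"

definition tr_le :: "nat list \<Rightarrow> nat list \<Rightarrow> bool" where
  "tr_le u v \<longleftrightarrow> length u = length v \<and> (\<forall>i<length u. u ! i \<le> v ! i)"

definition covers :: "'a set \<Rightarrow> ('a \<Rightarrow> 'a \<Rightarrow> bool) \<Rightarrow> 'a \<Rightarrow> 'a \<Rightarrow> bool" where
  "covers L le y x \<longleftrightarrow> x \<in> L \<and> y \<in> L \<and> le x y \<and> x \<noteq> y \<and>
     \<not> (\<exists>z\<in>L. le x z \<and> le z y \<and> z \<noteq> x \<and> z \<noteq> y)"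

definition join_irreducible :: "'a set \<Rightarrow> ('a \<Rightarrow> 'a \<Rightarrow> bool) \<Rightarrow> 'a \<Rightarrow> bool" where
  "join_irreducible L le x \<longleftrightarrow> x \<in> L \<and> card {y\<in>L. covers L le x y} = 1"

definition meet_irreducible :: "'a set \<Rightarrow> ('a \<Rightarrow> 'a \<Rightarrow> bool) \<Rightarrow> 'a \<Rightarrow> bool" where
  "meet_irreducible L le x \<longleftrightarrow> x \<in> L \<and> card {y\<in>L. covers L le y x} = 1"

text \<open>A saturated chain from the minimum to the maximum of L, as the list of its
  elements x_0 < x_1 < ... < x_k (its length is k = length xs - 1).\<close>
definition max_sat_chain :: "'a set \<Rightarrow> ('a \<Rightarrow> 'a \<Rightarrow> bool) \<Rightarrow> 'a list \<Rightarrow> bool" where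
  "max_sat_chain L le xs \<longleftrightarrow> xs \<noteq> [] \<and> set xs \<subseteq> L \<and>
     (\<forall>y\<in>L. le (hd xs) y) \<and> (\<forall>y\<in>L. le y (last xs)) \<and>
     (\<forall>i. Suc i < length xs \<longrightarrow> covers L le (xs ! Suc i) (xs ! i))"

definition extremal :: "'a set \<Rightarrow> ('a \<Rightarrow> 'a \<Rightarrow> bool) \<Rightarrow> bool" where
  "extremal L le \<longleftrightarrow> (\<exists>k.
     (\<exists>xs. max_sat_chain L le xs \<and> length xs = Suc k) \<and>
     (\<forall>xs. max_sat_chain L le xs \<longrightarrow> length xs \<le> Suc k) \<and>
     card {x\<in>L. join_irreducible L le x} = k \<and>
     card {x\<in>L. meet_irreducible L le x} = k)"

end

theory Submission
  imports Defs
begin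

lemma Tr_iff: "u \<in> Tr n \<longleftrightarrow> triword n u" by (simp add: Tr_def)

lemma tr_le_sum: assumes "tr_le u v" shows "sum_list u \<le> sum_list v"
proof -
  have l: "length u = length v" and le: "\<forall>i<length u. u!i \<le> v!i" using assms by (auto simp: tr_le_def)
  have "sum_list u = (\<Sum>i=0..<length u. u!i)" by (simp add: sum_list_sum_nth)
  also have "\<dots> \<le> (\<Sum>i=0..<length u. v!i)" using le by (intro sum_mono) auto
  also have "\<dots> = sum_list v" using l by (simp add: sum_list_sum_nth)
  finally show ?thesis .
qed

lemma tr_le_sum_less: assumes "tr_le u v" "u \<noteq> v" shows "sum_list u < sum_list v"
proof -
  have l: "length u = length v" and le: "\<forall>i<length u. u!i \<le> v!i" using assms by (auto simp: tr_le_def)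
  obtain i where i: "i < length u" "u!i \<noteq> v!i" using l assms(2) nth_equalityI by blast
  have "sum_list u = (\<Sum>i=0..<length u. u!i)" by (simp add: sum_list_sum_nth)
  also have "\<dots> < (\<Sum>i=0..<length u. v!i)" 
  proof (rule sum_strict_mono_ex1)
    show "\<forall>x\<in>{0..<length u}. u!x \<le> v!x" using le by auto
    show "\<exists>a\<in>{0..<length u}. u!a < v!a" using le i by (intro bexI[of _ i]) (auto simp: le_neq_implies_less)
  qed simp
  also have "\<dots> = sum_list v" using l by (simp add: sum_list_sum_nth)
  finally show ?thesis .
qed

lemma cover_step:
  assumes u: "u \<in> Tr n" and v: "v \<in> Tr n" and i: "i < n"
    and eq: "\<forall>j<n. j \<noteq> i \<longrightarrow> u!j = v!j" and lt: "u!i < v!i"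
    and c: "v!i = Suc (u!i) \<or> (u!i = 0 \<and> v!i = 2 \<and> v[i:=1] \<notin> Tr n)"
  shows "covers (Tr n) tr_le v u"
proof -
  have lu: "length u = n" and lv: "length v = n" using u v by (auto simp: Tr_def triword_def)
  have uv: "tr_le u v" using lu lv eq lt by (auto simp: tr_le_def less_or_eq_imp_le)
  have ne: "u \<noteq> v" using lt by auto
  have "\<not> (\<exists>z\<in>Tr n. tr_le u z \<and> tr_le z v \<and> z \<noteq> u \<and> z \<noteq> v)"
  proof
    assume "\<exists>z\<in>Tr n. tr_le u z \<and> tr_le z v \<and> z \<noteq> u \<and> z \<noteq> v"
    then obtain z where z: "z \<in> Tr n" "tr_le u z" "tr_le z v" "z \<noteq> u" "z \<noteq> v" by blast
    have lz: "length z = n" using z(1) by (auto simp: Tr_def triword_def)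
    have zj: "z!j = u!j" if "j<n" "j\<noteq>i" for j
      using z(2,3) that eq lu lz by (auto simp: tr_le_def) (metis le_antisym)
    have z1: "u!i \<le> z!i" "z!i \<le> v!i" using z(2,3) i lu lz by (auto simp: tr_le_def)
    have "z!i \<noteq> u!i"
    proof
      assume "z!i = u!i" then have "z = u" using zj lz lu by (metis nth_equalityI)
      then show False using z by blast
    qed
    moreover have "z!i \<noteq> v!i"
    proof
      assume "z!i = v!i" then have "z = v" using zj lz lv eq by (metis nth_equalityI)
      then show False using z by blast
    qed
    ultimately have zi: "u!i < z!i" "z!i < v!i" using z1 by auto
    then have cc: "u!i = 0 \<and> v!i = 2 \<and> v[i:=1] \<notin> Tr n" using c by auto
    then have "z!i = 1" using zi by auto
    then have "z = v[i:=1]"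
    proof (intro nth_equalityI)
      show "length z = length (v[i:=1])" using lz lv by simp
      fix j assume "j < length z" then show "z!j = v[i:=1]!j" using zj[of j] eq i lz lv \<open>z!i=1\<close> by (cases "j=i") auto
    qed
    then show False using z(1) cc by simp
  qed
  then show ?thesis using u v uv ne by (simp add: covers_def)
qed

lemma cover_diff:
  assumes cv: "covers (Tr n) tr_le v u"
  shows "\<exists>i<n. u!i < v!i \<and> (\<forall>j<n. j \<noteq> i \<longrightarrow> u!j = v!j)"
proof -
  have u: "triword n u" and v: "triword n v" and uv: "tr_le u v" and ne: "u \<noteq> v"
    and min: "\<not> (\<exists>z\<in>Tr n. tr_le u z \<and> tr_le z v \<and> z \<noteq> u \<and> z \<noteq> v)"
    using cv by (auto simp: covers_def Tr_def)
  have lu: "length u = n" and lv: "length v = n" using u v by (auto simp: triword_def)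
  have le: "\<And>j. j<n \<Longrightarrow> u!j \<le> v!j" using uv lu by (auto simp: tr_le_def)
  define D where "D = {j. j<n \<and> u!j \<noteq> v!j}"
  have Dne: "D \<noteq> {}"
  proof
    assume "D = {}"
    then have "u = v" using lu lv by (intro nth_equalityI) (auto simp: D_def)
    then show False using ne by simp
  qed
  have Dfin: "finite D" unfolding D_def by auto
  define i where "i = Max D"
  have iD: "i \<in> D" using Dne Dfin i_def by auto
  have after: "u!k = v!k" if "k<n" "i<k" for k
  proof (rule ccontr)
    assume "u!k \<noteq> v!k" then have "k \<in> D" using that D_def by auto
    then have "k \<le> i" using Dfin i_def by simp
    then show False using that by simp
  qed
  have i: "i<n" "u!i \<noteq> v!i" using iD D_def by auto
  have ilt: "u!i < v!i" using i le by (simp add: le_neq_implies_less)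
  define w where "w = v[i := u!i]"
  have lw: "length w = n" using lv w_def by simp
  have wn: "\<And>j. w!j = (if j = i then u!i else v!j)" using i lv w_def by (auto simp: nth_list_update)
  have w: "triword n w"
    unfolding triword_def
  proof (intro conjI allI impI)
    show "length w = n" by (rule lw)
  next
    fix j assume "j<n" then show "w!j \<in> {0,1,2}" using u v wn unfolding triword_def by auto
  next
    assume "1 \<le> n" then show "w!0 \<noteq> 2" using u v wn unfolding triword_def by (cases "i=0") auto
  next
    fix j k assume jk: "j<n" "k<n" "j<k" "w!j = 0"
    show "w!k \<noteq> 1"
    proof (cases "k = i")
      case True
      then have "j \<noteq> i" using jk by auto
      then have "v!j = 0" using jk wn by simp
      then have "u!j = 0" using le[of j] jk by simp
      then have "u!k \<noteq> 1" using u jk unfolding triword_def by blast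
      then show ?thesis using True wn by simp
    next
      case False
      note kf = False
      show ?thesis
      proof (cases "j = i")
        case True
        then have "u!j = 0" using jk wn by simp
        then have "u!k \<noteq> 1" using u jk unfolding triword_def by blast
        moreover have "u!k = v!k" using after jk True by simp
        ultimately show ?thesis using kf wn by simp
      next
        case False
        then have "v!j = 0" using jk wn by simp
        then have "v!k \<noteq> 1" using v jk unfolding triword_def by blast
        then show ?thesis using kf wn by simp
      qed
    qed
  qed
  have uw: "tr_le u w" using lu lw wn le by (auto simp: tr_le_def)
  have wv: "tr_le w v" using lv lw wn le i by (auto simp: tr_le_def)
  have wnv: "w \<noteq> v"
  proof
    assume "w = v" then have "w!i = v!i" by simp
    then show False using wn[of i] i by simp
  qed
  have "w = u" using min w uw wv wnv by (auto simp: Tr_def)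
  then have "\<forall>j<n. j \<noteq> i \<longrightarrow> u!j = v!j" using wn by auto
  then show ?thesis using i ilt by blast
qed


definition ch :: "nat \<Rightarrow> nat \<Rightarrow> nat list" where
  "ch n j = map (\<lambda>i. if j \<le> n then (if i<j then 1 else 0) else (if i < 2*n - j then 1 else 2)) [0..<n]"

lemma ch_len[simp]: "length (ch n j) = n" by (simp add: ch_def)
lemma ch_nth: "i < n \<Longrightarrow> ch n j ! i = (if j \<le> n then (if i<j then 1 else 0) else (if i < 2*n - j then 1 else 2))"
  by (simp add: ch_def)

lemma ch_Tr: assumes "n \<ge> 1" "j \<le> 2*n-1" shows "ch n j \<in> Tr n"
  using assms by (auto simp: Tr_def triword_def ch_nth)

lemma ch_cover: assumes n: "n \<ge> 1" and j: "j < 2*n-1" shows "covers (Tr n) tr_le (ch n (Suc j)) (ch n j)"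
proof (cases "j < n")
  case True
  show ?thesis
    by (rule cover_step[where i=j]) (use n j True in \<open>auto simp: ch_nth intro!: ch_Tr\<close>)
next
  case False
  show ?thesis
    by (rule cover_step[where i="2*n-j-1"]) (use n j False in \<open>auto simp: ch_nth intro!: ch_Tr\<close>)
qed

lemma sum2: "(\<forall>c\<in>set xs. c \<le> (2::nat)) \<Longrightarrow> sum_list xs \<le> 2 * length xs"
  by (induction xs) auto

lemma sum_bound: assumes "x \<in> Tr n" "n \<ge> 1" shows "sum_list x \<le> 2*n-1"
proof -
  have t: "triword n x" using assms by (simp add: Tr_def)
  then obtain a xs where x: "x = a # xs" using assms(2) unfolding triword_def by (cases x) auto
  have a: "a \<le> 1" using t x assms(2) unfolding triword_def by force
  have "\<forall>c\<in>set xs. c \<le> 2"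
  proof
    fix c assume "c \<in> set xs"
    then obtain i where "i < length xs" "xs!i = c" by (auto simp: in_set_conv_nth)
    then show "c \<le> 2" using t x unfolding triword_def by (auto dest!: spec[of _ "Suc i"])
  qed
  then have "sum_list xs \<le> 2 * length xs" by (rule sum2)
  moreover have "length xs = n - 1" using t x unfolding triword_def by auto
  ultimately show ?thesis using a x assms(2) by auto
qed

lemma chain_sum: assumes "max_sat_chain (Tr n) tr_le xs" shows "i < length xs \<Longrightarrow> i \<le> sum_list (xs!i)"
proof (induction i)
  case 0 then show ?case by simp
next
  case (Suc i)
  have "covers (Tr n) tr_le (xs!Suc i) (xs!i)" using assms Suc.prems unfolding max_sat_chain_def by blast
  then have "sum_list (xs!i) < sum_list (xs!Suc i)" unfolding covers_def by (blast intro: tr_le_sum_less)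
  then show ?case using Suc by simp
qed

lemma chain_bound: assumes "max_sat_chain (Tr n) tr_le xs" "n \<ge> 1" shows "length xs \<le> Suc (2*n-1)"
proof -
  have ne: "xs \<noteq> []" and sub: "set xs \<subseteq> Tr n" using assms unfolding max_sat_chain_def by auto
  let ?m = "length xs - 1"
  have m: "?m < length xs" using ne by simp
  have "?m \<le> sum_list (xs!?m)" using chain_sum[OF assms(1) m] .
  also have "\<dots> \<le> 2*n-1" using sum_bound[OF _ assms(2)] sub m nth_mem by blast
  finally show ?thesis by simp
qed

lemma chain_exists: assumes n: "n \<ge> 1" shows "max_sat_chain (Tr n) tr_le (map (ch n) [0..<2*n])"
  unfolding max_sat_chain_def
proof (intro conjI ballI allI impI)
  show "map (ch n) [0..<2*n] \<noteq> []" using n by simp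
  show "set (map (ch n) [0..<2*n]) \<subseteq> Tr n" using n by (auto intro!: ch_Tr)
next
  fix y assume y: "y \<in> Tr n"
  have "hd (map (ch n) [0..<2*n]) = ch n 0" using n by (simp add: hd_map upt_conv_Cons)
  then show "tr_le (hd (map (ch n) [0..<2*n])) y" using y by (auto simp: tr_le_def Tr_def triword_def ch_nth)
next
  fix y assume y: "y \<in> Tr n"
  have "last (map (ch n) [0..<2*n]) = ch n (2*n-1)" using n by (simp add: last_map)
  moreover have "tr_le y (ch n (2*n-1))"
    unfolding tr_le_def
  proof (intro conjI allI impI)
    show "length y = length (ch n (2*n-1))" using y by (simp add: Tr_def triword_def)
    fix i assume "i < length y"
    then show "y!i \<le> ch n (2*n-1) ! i" using y n unfolding Tr_def triword_def
      by (cases "i = 0") (auto simp: ch_nth)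
  qed
  ultimately show "tr_le y (last (map (ch n) [0..<2*n]))" by simp
next
  fix i assume "Suc i < length (map (ch n) [0..<2*n])"
  then show "covers (Tr n) tr_le (map (ch n) [0..<2*n] ! Suc i) (map (ch n) [0..<2*n] ! i)"
    using ch_cover[OF n, of i] by simp
qed


lemma Tr_len: "x \<in> Tr n \<Longrightarrow> length x = n" by (simp add: Tr_def triword_def)
lemma Tr_vals: "x \<in> Tr n \<Longrightarrow> j < n \<Longrightarrow> x!j = 0 \<or> x!j = 1 \<or> x!j = 2" by (auto simp: Tr_def triword_def)
lemma Tr_0: "x \<in> Tr n \<Longrightarrow> 0 < n \<Longrightarrow> x!0 \<noteq> 2" by (auto simp: Tr_def triword_def)
lemma Tr_01: "x \<in> Tr n \<Longrightarrow> j < k \<Longrightarrow> k < n \<Longrightarrow> x!j = 0 \<Longrightarrow> x!k \<noteq> 1" by (simp add: Tr_def triword_def) (meson order.strict_trans)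

lemma upd_Tr_iff: assumes x: "x \<in> Tr n" and i: "i < n"
  shows "x[i:=a] \<in> Tr n \<longleftrightarrow> (a = 0 \<or> a = 1 \<or> a = 2) \<and> (i = 0 \<longrightarrow> a \<noteq> 2) \<and>
     (a = 0 \<longrightarrow> (\<forall>k<n. i < k \<longrightarrow> x!k \<noteq> 1)) \<and> (a = 1 \<longrightarrow> (\<forall>j<i. x!j \<noteq> 0))"
proof -
  have l: "length x = n" using x by (rule Tr_len)
  show ?thesis
  proof
    assume t: "x[i:=a] \<in> Tr n"
    have v: "x[i:=a]!i = a" using l i by simp
    have c1: "a = 0 \<or> a = 1 \<or> a = 2" using Tr_vals[OF t i] v by simp
    have c2: "i = 0 \<longrightarrow> a \<noteq> 2" using Tr_0[OF t] v i by auto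
    have c3: "a = 0 \<longrightarrow> (\<forall>k<n. i < k \<longrightarrow> x!k \<noteq> 1)"
      using Tr_01[OF t, of i] v by (auto simp: nth_list_update)
    have c4: "a = 1 \<longrightarrow> (\<forall>j<i. x!j \<noteq> 0)"
    proof (intro impI allI)
      fix j assume "a = 1" "j < i" then show "x!j \<noteq> 0" using Tr_01[OF t, of j i] v i by auto
    qed
    show "(a = 0 \<or> a = 1 \<or> a = 2) \<and> (i = 0 \<longrightarrow> a \<noteq> 2) \<and>
     (a = 0 \<longrightarrow> (\<forall>k<n. i < k \<longrightarrow> x!k \<noteq> 1)) \<and> (a = 1 \<longrightarrow> (\<forall>j<i. x!j \<noteq> 0))"
      using c1 c2 c3 c4 by blast
  next
    assume c: "(a = 0 \<or> a = 1 \<or> a = 2) \<and> (i = 0 \<longrightarrow> a \<noteq> 2) \<and>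
     (a = 0 \<longrightarrow> (\<forall>k<n. i < k \<longrightarrow> x!k \<noteq> 1)) \<and> (a = 1 \<longrightarrow> (\<forall>j<i. x!j \<noteq> 0))"
    have w: "\<And>j. x[i:=a]!j = (if j = i then a else x!j)" using l i by (simp add: nth_list_update)
    show "x[i:=a] \<in> Tr n" unfolding Tr_def mem_Collect_eq triword_def
    proof (intro conjI allI impI)
      show "length (x[i:=a]) = n" using l by simp
      fix j assume "j < n" then show "x[i:=a]!j \<in> {0,1,2}" using c w Tr_vals[OF x] by auto
    next
      assume "1 \<le> n" then show "x[i:=a]!0 \<noteq> 2" using c w Tr_0[OF x] by auto
    next
      fix j k assume jk: "j < n" "k < n" "j < k" "x[i:=a]!j = 0"
      show "x[i:=a]!k \<noteq> 1"
      proof (cases "k = i")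
        case True then show ?thesis using jk c w by auto
      next
        case False
        then show ?thesis using jk c w Tr_01[OF x, of j k] by (cases "j = i") auto
      qed
    qed
  qed
qed

lemma L2: assumes x: "x \<in> Tr n" and i: "i < n" and xi: "x!i = 2"
  shows "\<exists>y. covers (Tr n) tr_le x y \<and> y!i \<noteq> x!i \<and> (\<forall>j<n. j \<noteq> i \<longrightarrow> y!j = x!j)"
proof -
  have l: "length x = n" using x by (rule Tr_len)
  show ?thesis
  proof (cases "\<exists>j<i. x!j = 0")
    case False
    have y: "x[i:=1] \<in> Tr n" using upd_Tr_iff[OF x i] False by auto
    have "covers (Tr n) tr_le x (x[i:=1])"
      by (rule cover_step[OF y x i]) (use l i xi in \<open>auto simp: nth_list_update\<close>)
    then show ?thesis using l i xi by (intro exI[of _ "x[i:=1]"]) (auto simp: nth_list_update)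
  next
    case True
    then obtain j0 where j0: "j0 < i" "x!j0 = 0" by blast
    have y: "x[i:=0] \<in> Tr n" using upd_Tr_iff[OF x i] Tr_01[OF x, of j0] j0 by auto
    have n1: "x[i:=1] \<notin> Tr n" using upd_Tr_iff[OF x i] j0 by auto
    have "covers (Tr n) tr_le x (x[i:=0])"
      by (rule cover_step[OF y x i]) (use l i xi n1 in \<open>auto simp: nth_list_update\<close>)
    then show ?thesis using l i xi by (intro exI[of _ "x[i:=0]"]) (auto simp: nth_list_update)
  qed
qed

lemma L1: assumes x: "x \<in> Tr n" and i: "i < n" and xi: "x!i = 1" and last: "\<forall>k<n. i < k \<longrightarrow> x!k \<noteq> 1"
  shows "\<exists>y. covers (Tr n) tr_le x y \<and> y!i \<noteq> x!i \<and> (\<forall>j<n. j \<noteq> i \<longrightarrow> y!j = x!j)"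
proof -
  have l: "length x = n" using x by (rule Tr_len)
  have y: "x[i:=0] \<in> Tr n" using upd_Tr_iff[OF x i] last by auto
  have "covers (Tr n) tr_le x (x[i:=0])"
    by (rule cover_step[OF y x i]) (use l i xi in \<open>auto simp: nth_list_update\<close>)
  then show ?thesis using l i xi by (intro exI[of _ "x[i:=0]"]) (auto simp: nth_list_update)
qed

lemma U0: assumes x: "x \<in> Tr n" and i: "i < n" and xi: "x!i = 0"
  shows "\<exists>y. covers (Tr n) tr_le y x \<and> y!i \<noteq> x!i \<and> (\<forall>j<n. j \<noteq> i \<longrightarrow> y!j = x!j)"
proof -
  have l: "length x = n" using x by (rule Tr_len)
  show ?thesis
  proof (cases "\<exists>j<i. x!j = 0")
    case False
    have y: "x[i:=1] \<in> Tr n" using upd_Tr_iff[OF x i] False by auto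
    have "covers (Tr n) tr_le (x[i:=1]) x"
      by (rule cover_step[OF x y i]) (use l i xi in \<open>auto simp: nth_list_update\<close>)
    then show ?thesis using l i xi by (intro exI[of _ "x[i:=1]"]) (auto simp: nth_list_update)
  next
    case True
    then obtain j0 where j0: "j0 < i" "x!j0 = 0" by blast
    have y: "x[i:=2] \<in> Tr n" using upd_Tr_iff[OF x i] j0 by auto
    have n1: "(x[i:=2])[i:=1] \<notin> Tr n" using upd_Tr_iff[OF x i] j0 by auto
    have "covers (Tr n) tr_le (x[i:=2]) x"
      by (rule cover_step[OF x y i]) (use l i xi n1 in \<open>auto simp: nth_list_update\<close>)
    then show ?thesis using l i xi by (intro exI[of _ "x[i:=2]"]) (auto simp: nth_list_update)
  qed
qed

lemma U1: assumes x: "x \<in> Tr n" and i: "i < n" and xi: "x!i = 1" and i0: "0 < i"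
  shows "\<exists>y. covers (Tr n) tr_le y x \<and> y!i \<noteq> x!i \<and> (\<forall>j<n. j \<noteq> i \<longrightarrow> y!j = x!j)"
proof -
  have l: "length x = n" using x by (rule Tr_len)
  have y: "x[i:=2] \<in> Tr n" using upd_Tr_iff[OF x i] i0 by auto
  have "covers (Tr n) tr_le (x[i:=2]) x"
    by (rule cover_step[OF x y i]) (use l i xi in \<open>auto simp: nth_list_update\<close>)
  then show ?thesis using l i xi by (intro exI[of _ "x[i:=2]"]) (auto simp: nth_list_update)
qed


lemma map_upt_nth[simp]: "i < n \<Longrightarrow> map f [0..<n] ! i = f i" by simp

definition fJ :: "nat \<Rightarrow> nat \<Rightarrow> nat list" where "fJ n k = map (\<lambda>j. if j < k then 1 else 0) [0..<n]"
definition gJ :: "nat \<Rightarrow> nat \<Rightarrow> nat list" where "gJ n i = map (\<lambda>j. if j = i then 2 else 0) [0..<n]"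
definition JJ :: "nat \<Rightarrow> nat list set" where "JJ n = fJ n ` {1..n} \<union> gJ n ` {1..<n}"

lemma fJ_Tr: "k \<le> n \<Longrightarrow> fJ n k \<in> Tr n" by (auto simp: fJ_def Tr_def triword_def)
lemma gJ_Tr: "1 \<le> i \<Longrightarrow> gJ n i \<in> Tr n" by (auto simp: gJ_def Tr_def triword_def)

lemma last1: assumes "j < n" "x!j = 1"
  obtains m where "m < n" "x!m = 1" "\<forall>k<n. m < k \<longrightarrow> x!k \<noteq> 1"
proof -
  define S where "S = {j. j < n \<and> x!j = 1}"
  have fin: "finite S" and ne: "S \<noteq> {}" using assms S_def by auto
  have "Max S \<in> S" using fin ne by simp
  moreover have "\<forall>k<n. Max S < k \<longrightarrow> x!k \<noteq> 1"
    using fin S_def Max_ge leD by blast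
  ultimately show ?thesis using that S_def by blast
qed

lemma JI_char: assumes x: "x \<in> Tr n" and n: "n \<ge> 1"
  shows "join_irreducible (Tr n) tr_le x \<longleftrightarrow> x \<in> JJ n"
proof -
  have l: "length x = n" using x by (rule Tr_len)
  let ?LC = "{y \<in> Tr n. covers (Tr n) tr_le x y}"
  show ?thesis
  proof
    assume "join_irreducible (Tr n) tr_le x"
    then have "card ?LC = 1" by (simp add: join_irreducible_def)
    then obtain a where a: "?LC = {a}" by (rule card_1_singletonE)
    have uniq: "y1 = y2" if "covers (Tr n) tr_le x y1" "covers (Tr n) tr_le x y2" for y1 y2
    proof -
      have "y1 \<in> ?LC" "y2 \<in> ?LC" using that by (auto simp: covers_def)
      then show ?thesis using a by auto
    qed
    show "x \<in> JJ n"
    proof (cases "\<exists>i<n. x!i = 2")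
      case True
      then obtain i where i: "i < n" "x!i = 2" by blast
      obtain y1 where y1: "covers (Tr n) tr_le x y1" "y1!i \<noteq> x!i" "\<forall>j<n. j \<noteq> i \<longrightarrow> y1!j = x!j"
        using L2[OF x i] by blast
      have no2: "x!j \<noteq> 2" if jn: "j < n" "j \<noteq> i" for j
      proof
        assume "x!j = 2"
        then obtain y2 where y2: "covers (Tr n) tr_le x y2" "y2!j \<noteq> x!j" "\<forall>k<n. k \<noteq> j \<longrightarrow> y2!k = x!k"
          using L2[OF x jn(1)] by blast
        then show False using uniq[OF y1(1) y2(1)] y1 jn by auto
      qed
      have no1: "x!j \<noteq> 1" if jn: "j < n" for j
      proof
        assume "x!j = 1"
        then obtain m where m: "m < n" "x!m = 1" "\<forall>k<n. m < k \<longrightarrow> x!k \<noteq> 1" using last1 jn by blast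
        obtain y2 where y2: "covers (Tr n) tr_le x y2" "y2!m \<noteq> x!m" "\<forall>k<n. k \<noteq> m \<longrightarrow> y2!k = x!k"
          using L1[OF x m] by blast
        have "m \<noteq> i" using m i by auto
        then show False using uniq[OF y1(1) y2(1)] y1 y2 i by auto
      qed
      have i0: "i \<noteq> 0" using Tr_0[OF x] i n by (metis gr_zeroI less_nat_zero_code)
      have "x = gJ n i"
      proof (rule nth_equalityI)
        show "length x = length (gJ n i)" using l by (simp add: gJ_def)
        fix j assume "j < length x"
        then show "x!j = gJ n i ! j" using l i no1 no2 Tr_vals[OF x, of j] by (auto simp: gJ_def)
      qed
      then show ?thesis using i i0 by (auto simp: JJ_def)
    next
      case False
      note no2 = False
      show ?thesis
      proof (cases "\<exists>j<n. x!j = 1")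
        case True
        then obtain j where "j < n" "x!j = 1" by blast
        then obtain m where m: "m < n" "x!m = 1" "\<forall>k<n. m < k \<longrightarrow> x!k \<noteq> 1" using last1 by blast
        have "x = fJ n (Suc m)"
        proof (rule nth_equalityI)
          show "length x = length (fJ n (Suc m))" using l by (simp add: fJ_def)
          fix j assume j: "j < length x"
          show "x!j = fJ n (Suc m) ! j"
          proof (cases "j < m")
            case True
            then have "x!j \<noteq> 0" using Tr_01[OF x, of j m] m by auto
            then show ?thesis using True j l no2 Tr_vals[OF x, of j] by (auto simp: fJ_def)
          next
            case False
            then show ?thesis using m j l no2 Tr_vals[OF x, of j] by (cases "j = m") (auto simp: fJ_def)
          qed
        qed
        then show ?thesis using m by (auto simp: JJ_def)
      next
        case False
        have "a \<in> ?LC" using a by auto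
        then have c: "covers (Tr n) tr_le x a" by simp
        then have "tr_le a x" "a \<noteq> x" by (auto simp: covers_def)
        moreover have "\<forall>j<n. x!j = 0" using False no2 Tr_vals[OF x] by blast
        ultimately have "a = x" using l by (auto simp: tr_le_def intro!: nth_equalityI)
        then show ?thesis using \<open>a \<noteq> x\<close> by simp
      qed
    qed
  next
    assume "x \<in> JJ n"
    then consider (f) k where "1 \<le> k" "k \<le> n" "x = fJ n k" | (g) i where "1 \<le> i" "i < n" "x = gJ n i"
      by (auto simp: JJ_def)
    then have "\<exists>a. ?LC = {a}"
    proof cases
      case f
      have xf: "\<And>j. j<n \<Longrightarrow> x!j = (if j < k then 1 else 0)" using f(3) by (simp add: fJ_def)
      have fk: "\<And>j. j<n \<Longrightarrow> fJ n (k-1) ! j = (if j < k-1 then 1 else 0)" by (simp add: fJ_def)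
      have k1: "k - 1 < n" using f by simp
      have c: "covers (Tr n) tr_le x (fJ n (k - 1))"
      proof (rule cover_step[OF fJ_Tr[of "k-1" n] _ k1])
        show "k - 1 \<le> n" using f by simp
        show "x \<in> Tr n" using f fJ_Tr[of k n] by simp
        show "\<forall>j<n. j \<noteq> k-1 \<longrightarrow> fJ n (k-1) ! j = x ! j" using fk xf f(1) by auto
        show "fJ n (k-1) ! (k-1) < x ! (k-1)" using fk[OF k1] xf[OF k1] f(1) by simp
        show "x ! (k-1) = Suc (fJ n (k-1) ! (k-1)) \<or> fJ n (k-1) ! (k-1) = 0 \<and> x ! (k-1) = 2 \<and> x[k-1:=1] \<notin> Tr n"
          using fk[OF k1] xf[OF k1] f(1) by simp
      qed
      have "?LC = {fJ n (k-1)}"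
      proof (intro equalityI subsetI)
        fix y assume "y \<in> ?LC"
        then have y: "y \<in> Tr n" "covers (Tr n) tr_le x y" by auto
        have ly: "length y = n" using Tr_len[OF y(1)] .
        obtain i where i: "i < n" "y!i < x!i" "\<forall>j<n. j \<noteq> i \<longrightarrow> y!j = x!j" using cover_diff[OF y(2)] by blast
        have ik: "i < k" "y!i = 0"
        proof -
          show "i < k" proof (rule ccontr) assume "\<not> i < k" then show False using i(2) xf[OF i(1)] by simp qed
          then show "y!i = 0" using i(2) xf[OF i(1)] by simp
        qed
        have "i = k - 1"
        proof (rule ccontr)
          assume ne: "i \<noteq> k - 1"
          have lt: "i < k-1" using ik ne by simp
          have "y!(k-1) = 1" using i(3)[rule_format, OF k1] ne xf[OF k1] f(1) by simp
          then show False using Tr_01[OF y(1) lt k1] ik by simp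
        qed
        have "y = fJ n (k-1)"
        proof (rule nth_equalityI)
          show "length y = length (fJ n (k-1))" using ly by (simp add: fJ_def)
          fix j assume j: "j < length y"
          show "y!j = fJ n (k-1) ! j"
          proof (cases "j = i")
            case True then show ?thesis using ik \<open>i = k-1\<close> j ly fk by simp
          next
            case False then show ?thesis using i(3) \<open>i = k-1\<close> xf fk j ly by auto
          qed
        qed
        then show "y \<in> {fJ n (k-1)}" by simp
      next
        fix y assume "y \<in> {fJ n (k-1)}"
        then show "y \<in> ?LC" using c f fJ_Tr[of "k-1" n] by simp
      qed
      then show ?thesis by blast
    next
      case g
      have n1: "(gJ n i)[i:=1] \<notin> Tr n"
        using upd_Tr_iff[OF gJ_Tr[OF g(1)] g(2)] g by (auto simp: gJ_def)
      have c: "covers (Tr n) tr_le x (fJ n 0)"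
        unfolding g(3)
      proof (rule cover_step[OF fJ_Tr[OF le0[of n]] gJ_Tr[OF g(1)] g(2)])
        show "\<forall>j<n. j \<noteq> i \<longrightarrow> fJ n 0 ! j = gJ n i ! j" by (simp add: fJ_def gJ_def)
        show "fJ n 0 ! i < gJ n i ! i" using g(2) by (simp add: fJ_def gJ_def)
        have "fJ n 0 ! i = 0" "gJ n i ! i = 2" using g(2) by (simp_all add: fJ_def gJ_def)
        then show "gJ n i ! i = Suc (fJ n 0 ! i) \<or> fJ n 0 ! i = 0 \<and> gJ n i ! i = 2 \<and> (gJ n i)[i:=1] \<notin> Tr n"
          using n1 by simp
      qed
      have "?LC = {fJ n 0}"
      proof (intro equalityI subsetI)
        fix y assume "y \<in> ?LC"
        then have y: "y \<in> Tr n" "covers (Tr n) tr_le x y" by auto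
        obtain i' where i': "i' < n" "y!i' < x!i'" "\<forall>j<n. j \<noteq> i' \<longrightarrow> y!j = x!j" using cover_diff[OF y(2)] by blast
        have xg: "\<And>j. j<n \<Longrightarrow> x!j = (if j = i then 2 else 0)" using g(3) by (simp add: gJ_def)
        have ii: "i' = i"
        proof (rule ccontr)
          assume "i' \<noteq> i" then have "x!i' = 0" using xg i'(1) by simp
          then show False using i'(2) by simp
        qed
        have i0: "0 \<noteq> i" "0 < n" using g(1,2) by auto
        have y0: "y!0 = 0" using i'(3)[rule_format, OF i0(2)] ii i0 xg[OF i0(2)] by simp
        have "y!i \<noteq> 1" using Tr_01[OF y(1), of 0 i] y0 g(1,2) by auto
        moreover have "y!i < 2" using i'(2) ii xg[OF g(2)] by simp
        ultimately have yi: "y!i = 0" by simp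
        have ly: "length y = n" using Tr_len[OF y(1)] .
        have "y = fJ n 0"
        proof (rule nth_equalityI)
          show "length y = length (fJ n 0)" using ly by (simp add: fJ_def)
          fix j assume j: "j < length y"
          show "y!j = fJ n 0 ! j"
          proof (cases "j = i")
            case True then show ?thesis using yi j ly by (simp add: fJ_def)
          next
            case False then show ?thesis using i'(3) ii xg j ly by (simp add: fJ_def)
          qed
        qed
        then show "y \<in> {fJ n 0}" by simp
      next
        fix y assume "y \<in> {fJ n 0}"
        then show "y \<in> ?LC" using c fJ_Tr[OF le0[of n]] by simp
      qed
      then show ?thesis by blast
    qed
    then obtain a where "?LC = {a}" by blast
    then show "join_irreducible (Tr n) tr_le x" using x unfolding join_irreducible_def by simp
  qed
qed

lemma card_JJ: assumes n: "n \<ge> 1" shows "card (JJ n) = 2*n-1"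
proof -
  have i1: "inj_on (fJ n) {1..n}"
  proof (rule inj_onI)
    fix k k' assume kk: "k \<in> {1..n}" "k' \<in> {1..n}" "fJ n k = fJ n k'"
    show "k = k'"
    proof (rule ccontr)
      assume "k \<noteq> k'"
      then consider "k < k'" | "k' < k" by linarith
      then show False
      proof cases
        case 1 then have "fJ n k ! k \<noteq> fJ n k' ! k" using kk by (auto simp: fJ_def)
        then show False using kk by simp
      next
        case 2 then have "fJ n k ! k' \<noteq> fJ n k' ! k'" using kk by (auto simp: fJ_def)
        then show False using kk by simp
      qed
    qed
  qed
  have i2: "inj_on (gJ n) {1..<n}"
  proof (rule inj_onI)
    fix k k' assume kk: "k \<in> {1..<n}" "k' \<in> {1..<n}" "gJ n k = gJ n k'"
    show "k = k'"
    proof (rule ccontr)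
      assume "k \<noteq> k'"
      then have "gJ n k ! k \<noteq> gJ n k' ! k" using kk by (auto simp: gJ_def)
      then show False using kk by simp
    qed
  qed
  have d: "fJ n ` {1..n} \<inter> gJ n ` {1..<n} = {}"
  proof -
    have "fJ n k ! 0 \<noteq> gJ n i ! 0" if "k \<in> {1..n}" "i \<in> {1..<n}" for k i using that n by (auto simp: fJ_def gJ_def)
    then have "fJ n k \<noteq> gJ n i" if "k \<in> {1..n}" "i \<in> {1..<n}" for k i using that by metis
    then show ?thesis by blast
  qed
  have "card (JJ n) = card (fJ n ` {1..n}) + card (gJ n ` {1..<n})"
    unfolding JJ_def using d by (intro card_Un_disjoint) simp_all
  also have "\<dots> = n + (n - 1)" using card_image[OF i1] card_image[OF i2] by simp
  finally show ?thesis using n by simp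
qed


definition tp :: "nat \<Rightarrow> nat list" where "tp n = map (\<lambda>j. if j = 0 then 1 else 2) [0..<n]"
definition h0 :: "nat \<Rightarrow> nat list" where "h0 n = map (\<lambda>j. if j = 0 then 0 else 2) [0..<n]"
definition h1 :: "nat \<Rightarrow> nat \<Rightarrow> nat list" where "h1 n i = map (\<lambda>j. if j = 0 then 1 else if j = i then 0 else 2) [0..<n]"
definition h2 :: "nat \<Rightarrow> nat \<Rightarrow> nat list" where "h2 n i = map (\<lambda>j. if j = 0 \<or> j = i then 1 else 2) [0..<n]"
definition MM :: "nat \<Rightarrow> nat list set" where "MM n = {h0 n} \<union> h1 n ` {1..<n} \<union> h2 n ` {1..<n}"

lemma tp_Tr: "tp n \<in> Tr n" by (auto simp: tp_def Tr_def triword_def)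
lemma h0_Tr: "h0 n \<in> Tr n" by (auto simp: h0_def Tr_def triword_def)
lemma h1_Tr: "1 \<le> i \<Longrightarrow> h1 n i \<in> Tr n" by (auto simp: h1_def Tr_def triword_def)
lemma h2_Tr: "h2 n i \<in> Tr n" by (auto simp: h2_def Tr_def triword_def)
lemma tp_nth: "j < n \<Longrightarrow> tp n ! j = (if j = 0 then 1 else 2)" by (simp add: tp_def)
lemma h0_nth: "j < n \<Longrightarrow> h0 n ! j = (if j = 0 then 0 else 2)" by (simp add: h0_def)
lemma h1_nth: "j < n \<Longrightarrow> h1 n i ! j = (if j = 0 then 1 else if j = i then 0 else 2)" by (simp add: h1_def)
lemma h2_nth: "j < n \<Longrightarrow> h2 n i ! j = (if j = 0 \<or> j = i then 1 else 2)" by (simp add: h2_def)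
lemma tp_len[simp]: "length (tp n) = n" and h0_len[simp]: "length (h0 n) = n"
  and h1_len[simp]: "length (h1 n i) = n" and h2_len[simp]: "length (h2 n i) = n"
  by (simp_all add: tp_def h0_def h1_def h2_def)

lemma MI_char: assumes x: "x \<in> Tr n" and n: "n \<ge> 1"
  shows "meet_irreducible (Tr n) tr_le x \<longleftrightarrow> x \<in> MM n"
proof -
  have l: "length x = n" using x by (rule Tr_len)
  have n0: "0 < n" using n by simp
  let ?UC = "{y \<in> Tr n. covers (Tr n) tr_le y x}"
  show ?thesis
  proof
    assume "meet_irreducible (Tr n) tr_le x"
    then have "card ?UC = 1" by (simp add: meet_irreducible_def)
    then obtain a where a: "?UC = {a}" by (rule card_1_singletonE)
    have uniq: "y1 = y2" if "covers (Tr n) tr_le y1 x" "covers (Tr n) tr_le y2 x" for y1 y2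
    proof -
      have "y1 \<in> ?UC" "y2 \<in> ?UC" using that by (auto simp: covers_def)
      then show ?thesis using a by auto
    qed
    have x0: "x!0 \<noteq> 2" using Tr_0[OF x n0] .
    show "x \<in> MM n"
    proof (cases "\<exists>i<n. x!i = 0")
      case True
      then obtain i where i: "i < n" "x!i = 0" by blast
      obtain y1 where y1: "covers (Tr n) tr_le y1 x" "y1!i \<noteq> x!i" "\<forall>j<n. j \<noteq> i \<longrightarrow> y1!j = x!j"
        using U0[OF x i] by blast
      have no0: "x!j \<noteq> 0" if jn: "j < n" "j \<noteq> i" for j
      proof
        assume "x!j = 0"
        then obtain y2 where y2: "covers (Tr n) tr_le y2 x" "y2!j \<noteq> x!j" "\<forall>k<n. k \<noteq> j \<longrightarrow> y2!k = x!k"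
          using U0[OF x jn(1)] by blast
        have "y1 = y2" using uniq[OF y1(1) y2(1)] .
        then show False using y1 y2 jn by auto
      qed
      have no1: "x!j \<noteq> 1" if jn: "j < n" "0 < j" for j
      proof
        assume xj: "x!j = 1"
        then obtain y2 where y2: "covers (Tr n) tr_le y2 x" "y2!j \<noteq> x!j" "\<forall>k<n. k \<noteq> j \<longrightarrow> y2!k = x!k"
          using U1[OF x jn(1) xj jn(2)] by blast
        have "j \<noteq> i" using xj i by auto
        moreover have "y1 = y2" using uniq[OF y1(1) y2(1)] .
        ultimately show False using y1 y2 i by auto
      qed
      show ?thesis
      proof (cases "i = 0")
        case True
        have "x = h0 n"
        proof (rule nth_equalityI)
          show "length x = length (h0 n)" using l by simp
          fix j assume j: "j < length x"
          show "x!j = h0 n ! j"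
          proof (cases "j = 0")
            case True then show ?thesis using i \<open>i = 0\<close> j l h0_nth by simp
          next
            case False then show ?thesis using no0[of j] no1[of j] Tr_vals[OF x, of j] True j l h0_nth by auto
          qed
        qed
        then show ?thesis by (simp add: MM_def)
      next
        case False
        have "x = h1 n i"
        proof (rule nth_equalityI)
          show "length x = length (h1 n i)" using l by simp
          fix j assume j: "j < length x"
          show "x!j = h1 n i ! j"
          proof (cases "j = 0")
            case True then show ?thesis using no0[of 0] x0 Tr_vals[OF x, of 0] False j l h1_nth by auto
          next
            case j0: False
            show ?thesis
            proof (cases "j = i")
              case True then show ?thesis using i j l h1_nth j0 by simp
            next
              case ji: False
              then show ?thesis using no0[of j] no1[of j] Tr_vals[OF x, of j] j0 j l h1_nth by auto
            qed
          qed
        qed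
        then show ?thesis using False i by (simp add: MM_def)
      qed
    next
      case False
      note no0 = False
      have x01: "x!0 = 1" using no0 x0 Tr_vals[OF x n0] n0 by auto
      show ?thesis
      proof (cases "\<exists>m<n. 0 < m \<and> x!m = 1")
        case True
        then obtain m where m: "m < n" "0 < m" "x!m = 1" by blast
        obtain y1 where y1: "covers (Tr n) tr_le y1 x" "y1!m \<noteq> x!m" "\<forall>j<n. j \<noteq> m \<longrightarrow> y1!j = x!j"
          using U1[OF x m(1) m(3) m(2)] by blast
        have no1: "x!j \<noteq> 1" if jn: "j < n" "0 < j" "j \<noteq> m" for j
        proof
          assume xj: "x!j = 1"
          then obtain y2 where y2: "covers (Tr n) tr_le y2 x" "y2!j \<noteq> x!j" "\<forall>k<n. k \<noteq> j \<longrightarrow> y2!k = x!k"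
            using U1[OF x jn(1) xj jn(2)] by blast
          have "y1 = y2" using uniq[OF y1(1) y2(1)] .
          then show False using y1 y2 jn by auto
        qed
        have "x = h2 n m"
        proof (rule nth_equalityI)
          show "length x = length (h2 n m)" using l by simp
          fix j assume j: "j < length x"
          show "x!j = h2 n m ! j"
          proof (cases "j = 0 \<or> j = m")
            case True then show ?thesis using x01 m j l h2_nth by auto
          next
            case False then show ?thesis using no0 no1[of j] Tr_vals[OF x, of j] j l h2_nth by auto
          qed
        qed
        then show ?thesis using m by (simp add: MM_def)
      next
        case False
        have x2: "x!j = 2" if "j < n" "0 < j" for j using False no0 Tr_vals[OF x, of j] that by auto
        have "a \<in> ?UC" using a by auto
        then have ac: "a \<in> Tr n" "covers (Tr n) tr_le a x" by auto
        then have le: "tr_le x a" and ne: "a \<noteq> x" by (auto simp: covers_def)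
        have "a = x"
        proof (rule nth_equalityI)
          show "length a = length x" using le by (simp add: tr_le_def)
          fix j assume j: "j < length a"
          then have jn: "j < n" using Tr_len[OF ac(1)] by simp
          have ge: "x!j \<le> a!j" using le jn l by (simp add: tr_le_def)
          show "a!j = x!j"
          proof (cases "j = 0")
            case True then show ?thesis using ge x01 Tr_0[OF ac(1) n0] Tr_vals[OF ac(1) jn] by auto
          next
            case False then show ?thesis using ge x2[OF jn] Tr_vals[OF ac(1) jn] by auto
          qed
        qed
        then show ?thesis using ne by simp
      qed
    qed
  next
    assume "x \<in> MM n"
    then consider (z) "x = h0 n" | (p) i where "1 \<le> i" "i < n" "x = h1 n i" | (q) i where "1 \<le> i" "i < n" "x = h2 n i"
      by (auto simp: MM_def)
    then have "\<exists>b. ?UC = {b}"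
    proof cases
      case z
      have xn: "\<And>j. j<n \<Longrightarrow> x!j = (if j = 0 then 0 else 2)" using z h0_nth by simp
      have c: "covers (Tr n) tr_le (tp n) x"
      proof (rule cover_step[OF x tp_Tr n0])
        show "\<forall>j<n. j \<noteq> 0 \<longrightarrow> x ! j = tp n ! j" using xn tp_nth by simp
        show "x ! 0 < tp n ! 0" using xn[OF n0] tp_nth[OF n0] by simp
        show "tp n ! 0 = Suc (x ! 0) \<or> x ! 0 = 0 \<and> tp n ! 0 = 2 \<and> (tp n)[0:=1] \<notin> Tr n"
          using xn[OF n0] tp_nth[OF n0] by simp
      qed
      have "?UC = {tp n}"
      proof (intro equalityI subsetI)
        fix y assume "y \<in> ?UC"
        then have y: "y \<in> Tr n" "covers (Tr n) tr_le y x" by auto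
        have ly: "length y = n" using Tr_len[OF y(1)] .
        obtain i where i: "i < n" "x!i < y!i" "\<forall>j<n. j \<noteq> i \<longrightarrow> x!j = y!j" using cover_diff[OF y(2)] by blast
        have i0: "i = 0"
        proof (rule ccontr)
          assume "i \<noteq> 0" then show False using i(2) xn[OF i(1)] Tr_vals[OF y(1) i(1)] by auto
        qed
        have y0: "y!0 = 1" using i(2) i0 xn[OF n0] Tr_vals[OF y(1) n0] Tr_0[OF y(1) n0] by auto
        have "y = tp n"
        proof (rule nth_equalityI)
          show "length y = length (tp n)" using ly by simp
          fix j assume j: "j < length y"
          show "y!j = tp n ! j"
          proof (cases "j = 0")
            case True then show ?thesis using y0 tp_nth[OF n0] by simp
          next
            case False then show ?thesis using i(3) i0 xn j ly tp_nth by auto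
          qed
        qed
        then show "y \<in> {tp n}" by simp
      next
        fix y assume "y \<in> {tp n}"
        then show "y \<in> ?UC" using c tp_Tr by simp
      qed
      then show ?thesis by blast
    next
      case p
      have xn: "\<And>j. j<n \<Longrightarrow> x!j = (if j = 0 then 1 else if j = i then 0 else 2)" using p h1_nth by simp
      have hn: "\<And>j. j<n \<Longrightarrow> h2 n i!j = (if j = 0 \<or> j = i then 1 else 2)" using h2_nth by simp
      have c: "covers (Tr n) tr_le (h2 n i) x"
      proof (rule cover_step[OF x h2_Tr p(2)])
        show "\<forall>j<n. j \<noteq> i \<longrightarrow> x ! j = h2 n i ! j" using xn hn by simp
        show "x ! i < h2 n i ! i" using xn[OF p(2)] hn[OF p(2)] p(1) by simp
        show "h2 n i ! i = Suc (x ! i) \<or> x ! i = 0 \<and> h2 n i ! i = 2 \<and> (h2 n i)[i:=1] \<notin> Tr n"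
          using xn[OF p(2)] hn[OF p(2)] p(1) by simp
      qed
      have "?UC = {h2 n i}"
      proof (intro equalityI subsetI)
        fix y assume "y \<in> ?UC"
        then have y: "y \<in> Tr n" "covers (Tr n) tr_le y x" by auto
        have ly: "length y = n" using Tr_len[OF y(1)] .
        obtain i' where i': "i' < n" "x!i' < y!i'" "\<forall>j<n. j \<noteq> i' \<longrightarrow> x!j = y!j" using cover_diff[OF y(2)] by blast
        have ii: "i' = i"
        proof (rule ccontr)
          assume ne: "i' \<noteq> i"
          show False
          proof (cases "i' = 0")
            case True then show False using i'(2) xn[OF i'(1)] Tr_vals[OF y(1) i'(1)] Tr_0[OF y(1) n0] by auto
          next
            case False then show False using ne i'(2) xn[OF i'(1)] Tr_vals[OF y(1) i'(1)] by auto
          qed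
        qed
        have yi: "y!i = 1"
        proof (rule ccontr)
          assume "y!i \<noteq> 1"
          then have y2: "y!i = 2" using i'(2) ii xn[OF p(2)] p(1) Tr_vals[OF y(1) p(2)] by auto
          have yn: "\<And>j. j<n \<Longrightarrow> y!j = (if j = 0 then 1 else 2)"
            using i'(3) ii xn y2 p(1) by (metis not_one_le_zero)
          have "tr_le x (h2 n i)" using l xn hn by (auto simp: tr_le_def)
          moreover have "tr_le (h2 n i) y" using ly yn hn by (auto simp: tr_le_def)
          moreover have "h2 n i \<noteq> x" using xn[OF p(2)] hn[OF p(2)] p(1) by auto
          moreover have "h2 n i \<noteq> y" using y2 hn[OF p(2)] p(1) by auto
          ultimately show False using y(2) h2_Tr[of n i] unfolding covers_def by blast
        qed
        have "y = h2 n i"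
        proof (rule nth_equalityI)
          show "length y = length (h2 n i)" using ly by simp
          fix j assume j: "j < length y"
          show "y!j = h2 n i ! j"
          proof (cases "j = i")
            case True then show ?thesis using yi hn p by simp
          next
            case False then show ?thesis using i'(3) ii xn hn j ly by auto
          qed
        qed
        then show "y \<in> {h2 n i}" by simp
      next
        fix y assume "y \<in> {h2 n i}"
        then show "y \<in> ?UC" using c h2_Tr by simp
      qed
      then show ?thesis by blast
    next
      case q
      have xn: "\<And>j. j<n \<Longrightarrow> x!j = (if j = 0 \<or> j = i then 1 else 2)" using q h2_nth by simp
      have c: "covers (Tr n) tr_le (tp n) x"
      proof (rule cover_step[OF x tp_Tr q(2)])
        show "\<forall>j<n. j \<noteq> i \<longrightarrow> x ! j = tp n ! j" using xn tp_nth by simp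
        show "x ! i < tp n ! i" using xn[OF q(2)] tp_nth[OF q(2)] q(1) by simp
        show "tp n ! i = Suc (x ! i) \<or> x ! i = 0 \<and> tp n ! i = 2 \<and> (tp n)[i:=1] \<notin> Tr n"
          using xn[OF q(2)] tp_nth[OF q(2)] q(1) by simp
      qed
      have "?UC = {tp n}"
      proof (intro equalityI subsetI)
        fix y assume "y \<in> ?UC"
        then have y: "y \<in> Tr n" "covers (Tr n) tr_le y x" by auto
        have ly: "length y = n" using Tr_len[OF y(1)] .
        obtain i' where i': "i' < n" "x!i' < y!i'" "\<forall>j<n. j \<noteq> i' \<longrightarrow> x!j = y!j" using cover_diff[OF y(2)] by blast
        have ii: "i' = i"
        proof (rule ccontr)
          assume ne: "i' \<noteq> i"
          show False
          proof (cases "i' = 0")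
            case True then show False using i'(2) xn[OF i'(1)] Tr_vals[OF y(1) i'(1)] Tr_0[OF y(1) n0] by auto
          next
            case False then show False using ne i'(2) xn[OF i'(1)] Tr_vals[OF y(1) i'(1)] by auto
          qed
        qed
        have yi: "y!i = 2" using i'(2) ii xn[OF q(2)] Tr_vals[OF y(1) q(2)] by auto
        have "y = tp n"
        proof (rule nth_equalityI)
          show "length y = length (tp n)" using ly by simp
          fix j assume j: "j < length y"
          show "y!j = tp n ! j"
          proof (cases "j = i")
            case True then show ?thesis using yi tp_nth q by simp
          next
            case False then show ?thesis using i'(3) ii xn tp_nth j ly by auto
          qed
        qed
        then show "y \<in> {tp n}" by simp
      next
        fix y assume "y \<in> {tp n}"
        then show "y \<in> ?UC" using c tp_Tr by simp
      qed
      then show ?thesis by blast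
    qed
    then obtain b where "?UC = {b}" by blast
    then show "meet_irreducible (Tr n) tr_le x" using x unfolding meet_irreducible_def by simp
  qed
qed


lemma card_MM: assumes n: "n \<ge> 1" shows "card (MM n) = 2*n-1"
proof -
  have n0: "0 < n" using n by simp
  have i1: "inj_on (h1 n) {1..<n}"
  proof (rule inj_onI)
    fix k k' assume kk: "k \<in> {1..<n}" "k' \<in> {1..<n}" "h1 n k = h1 n k'"
    show "k = k'"
    proof (rule ccontr)
      assume ne: "k \<noteq> k'"
      have "h1 n k ! k \<noteq> h1 n k' ! k" using kk ne h1_nth[of k n k] h1_nth[of k n k'] by auto
      then show False using kk by simp
    qed
  qed
  have i2: "inj_on (h2 n) {1..<n}"
  proof (rule inj_onI)
    fix k k' assume kk: "k \<in> {1..<n}" "k' \<in> {1..<n}" "h2 n k = h2 n k'"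
    show "k = k'"
    proof (rule ccontr)
      assume ne: "k \<noteq> k'"
      have "h2 n k ! k \<noteq> h2 n k' ! k" using kk ne h2_nth[of k n k] h2_nth[of k n k'] by auto
      then show False using kk by simp
    qed
  qed
  have d1: "h0 n \<notin> h1 n ` {1..<n} \<union> h2 n ` {1..<n}"
  proof
    assume "h0 n \<in> h1 n ` {1..<n} \<union> h2 n ` {1..<n}"
    then obtain k where "h0 n = h1 n k \<or> h0 n = h2 n k" by blast
    then have "h0 n ! 0 = h1 n k ! 0 \<or> h0 n ! 0 = h2 n k ! 0" by auto
    then show False using h0_nth[OF n0] h1_nth[OF n0] h2_nth[OF n0] by simp
  qed
  have d2: "h1 n ` {1..<n} \<inter> h2 n ` {1..<n} = {}"
  proof -
    have "h1 n k \<noteq> h2 n k'" if "k \<in> {1..<n}" "k' \<in> {1..<n}" for k k'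
    proof
      assume "h1 n k = h2 n k'"
      then have "h1 n k ! k = h2 n k' ! k" by simp
      then show False using that h1_nth[of k n k] h2_nth[of k n k'] by (simp split: if_splits)
    qed
    then show ?thesis by blast
  qed
  have "MM n = insert (h0 n) (h1 n ` {1..<n} \<union> h2 n ` {1..<n})" by (auto simp: MM_def)
  then have "card (MM n) = Suc (card (h1 n ` {1..<n} \<union> h2 n ` {1..<n}))" using d1 by simp
  also have "card (h1 n ` {1..<n} \<union> h2 n ` {1..<n}) = card (h1 n ` {1..<n}) + card (h2 n ` {1..<n})"
    using d2 by (intro card_Un_disjoint) simp_all
  also have "\<dots> = (n - 1) + (n - 1)" using card_image[OF i1] card_image[OF i2] by simp
  finally show ?thesis using n by simp
qed

theorem proposition3p2:
  fixes n :: nat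
  assumes "n \<ge> 1"
  shows "extremal (Tr n) tr_le"
proof -
  have J: "{x \<in> Tr n. join_irreducible (Tr n) tr_le x} = JJ n"
  proof -
    have "JJ n \<subseteq> Tr n" by (auto simp: JJ_def intro!: fJ_Tr gJ_Tr)
    then show ?thesis using JI_char[OF _ assms] by blast
  qed
  have M: "{x \<in> Tr n. meet_irreducible (Tr n) tr_le x} = MM n"
  proof -
    have "MM n \<subseteq> Tr n" by (auto simp: MM_def intro!: h0_Tr h1_Tr h2_Tr)
    then show ?thesis using MI_char[OF _ assms] by blast
  qed
  show ?thesis unfolding extremal_def
  proof (rule exI[of _ "2*n-1"], intro conjI allI impI)
    show "\<exists>xs. max_sat_chain (Tr n) tr_le xs \<and> length xs = Suc (2*n-1)"
      using chain_exists[OF assms] assms by (intro exI[of _ "map (ch n) [0..<2*n]"]) simp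
    show "card {x \<in> Tr n. join_irreducible (Tr n) tr_le x} = 2*n-1" using J card_JJ[OF assms] by simp
    show "card {x \<in> Tr n. meet_irreducible (Tr n) tr_le x} = 2*n-1" using M card_MM[OF assms] by simp
    fix xs assume "max_sat_chain (Tr n) tr_le xs"
    then show "length xs \<le> Suc (2*n-1)" using chain_bound assms by blast
  qed
qed

end
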